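(* Let $\Omega\subsetneq\mathbb{S}^m$ be a domain and $\rho:\Omega\to\mathbb{R}$ a smooth proper function. Then the associated map $\phi:\Omega\to\mathbb{H}^{m+1}$ is proper.
   Context: $\mathbb{S}^m\subset\mathbb{R}^{m+1}$ is the unit sphere with round metric $g_0$; $\nabla$ and $|\cdot|$ denote gradient and norm with respect to $g_0$. Let $\mathbb{L}^{m+2}$ be $\mathbb{R}^{m+2}$ with $\langle\!\langle x,y\rangle\!\rangle=-x_0y_0+\sum_{i=1}^{m+1}x_iy_i$, and $\mathbb{H}^{m+1}=\{x:\langle\!\langle x,x\rangle\!\rangle=-1,\ x_0>0\}$. For $\rho\in C^1(\Omega)$ the associated map $\phi=\phi^\rho:\Omega\to\mathbb{H}^{m+1}$ is $$\phi(x)=\frac{e^{\rho(x)}}{2}\Big(1+e^{-2\rho(x)}\big(1+|\nabla\rho(x)|^2\big)\Big)(1,x)+e^{-\rho(x)}\big(0,-x+\nabla\rho(x)\big).$$ Proper means preimages of compact sets are compact. *)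

theory Defs
  imports "HOL-Analysis.Analysis"
begin

text \<open>The sphere S^m is sphere 0 1 in real^'n, where CARD('n) = m+1.
  Lorentz space L^{m+2} is modelled as real \<times> (real^'n) (first coordinate x_0).\<close>

definition lorentz_form :: "real \<times> (real^'n) \<Rightarrow> real \<times> (real^'n) \<Rightarrow> real" where
  "lorentz_form p q = - fst p * fst q + snd p \<bullet> snd q"

definition hyperbolic_space :: "(real \<times> (real^'n)) set" where
  "hyperbolic_space = {p. lorentz_form p p = -1 \<and> fst p > 0}"

coinductive smooth_on :: "(real^'n) set \<Rightarrow> (real^'n \<Rightarrow> real) \<Rightarrow> bool" where
  "\<lbrakk> continuous_on S f; \<forall>x\<in>S. f differentiable (at x);
     \<forall>i. smooth_on S (\<lambda>x. frechet_derivative f (at x) (axis i 1)) \<rbrakk>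
   \<Longrightarrow> smooth_on S f"

text \<open>A function on a subset of the sphere is extended 0-homogeneously to the open cone
  over it; its smoothness and its round-metric gradient are those of this extension
  (the euclidean gradient of the 0-homogeneous extension at a point of the sphere is
  the tangential, i.e. round-metric, gradient).\<close>

definition sph_ext :: "(real^'n \<Rightarrow> real) \<Rightarrow> real^'n \<Rightarrow> real" where
  "sph_ext \<rho> = (\<lambda>y. \<rho> (y /\<^sub>R norm y))"

definition sph_cone :: "(real^'n) set \<Rightarrow> (real^'n) set" where
  "sph_cone \<Omega> = {y. y \<noteq> 0 \<and> y /\<^sub>R norm y \<in> \<Omega>}"

definition sphere_smooth_on :: "(real^'n) set \<Rightarrow> (real^'n \<Rightarrow> real) \<Rightarrow> bool" where
  "sphere_smooth_on \<Omega> \<rho> \<longleftrightarrow> smooth_on (sph_cone \<Omega>) (sph_ext \<rho>)"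

definition sph_grad :: "(real^'n \<Rightarrow> real) \<Rightarrow> real^'n \<Rightarrow> real^'n" where
  "sph_grad \<rho> x = (\<chi> i. frechet_derivative (sph_ext \<rho>) (at x) (axis i 1))"

definition assoc_map :: "(real^'n \<Rightarrow> real) \<Rightarrow> real^'n \<Rightarrow> real \<times> (real^'n)" where
  "assoc_map \<rho> x =
     (exp (\<rho> x) / 2 * (1 + exp (-2 * \<rho> x) * (1 + (norm (sph_grad \<rho> x))\<^sup>2))) *\<^sub>R (1, x)
     + exp (- \<rho> x) *\<^sub>R (0, - x + sph_grad \<rho> x)"

definition preimage_compact_map :: "'a::topological_space set \<Rightarrow> 'b::topological_space set \<Rightarrow> ('a \<Rightarrow> 'b) \<Rightarrow> bool" where
  "preimage_compact_map S T f \<longleftrightarrow> (\<forall>K. K \<subseteq> T \<and> compact K \<longrightarrow> compact {x\<in>S. f x \<in> K})"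

end

theory Submission
  imports Defs
begin

lemma smooth_on_cont: "smooth_on S f \<Longrightarrow> continuous_on S f"
  by (erule smooth_on.cases) auto

lemma smooth_on_partial:
  "smooth_on S f \<Longrightarrow> smooth_on S (\<lambda>x. frechet_derivative f (at x) (axis i 1))"
  by (erule smooth_on.cases) auto

lemma fst_assoc_ge:
  "fst (assoc_map \<rho> x) \<ge> exp (\<rho> x) / 2 + exp (- \<rho> x) / 2"
proof -
  have e: "exp (\<rho> x) * exp (-2 * \<rho> x) = exp (- \<rho> x)"
    by (simp flip: exp_add)
  have "fst (assoc_map \<rho> x) = exp (\<rho> x) / 2 + exp (- \<rho> x) / 2 * (1 + (norm (sph_grad \<rho> x))\<^sup>2)"
    unfolding assoc_map_def using e by (simp add: algebra_simps)
  also have "\<dots> \<ge> exp (\<rho> x) / 2 + exp (- \<rho> x) / 2"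
    by simp
  finally show ?thesis .
qed

lemma fst_le_aux: "norm (p::real \<times> 'b::real_normed_vector) \<le> C \<Longrightarrow> fst p \<le> C"
proof -
  assume a: "norm p \<le> C"
  have "norm (fst p) \<le> norm p"
    using norm_fst_le[of "fst p" "snd p"] by simp
  then show ?thesis using a by simp
qed

lemma lin_aux: "(a::real) \<le> C \<Longrightarrow> e1/2 + e2/2 \<le> a \<Longrightarrow> e1 > 0 \<Longrightarrow> e2 > 0 \<Longrightarrow> e1 \<le> 2*C \<and> e2 \<le> 2*C"
  by linarith

theorem mainTheorem2:
  fixes \<Omega> :: "(real^'n) set" and \<rho> :: "real^'n \<Rightarrow> real"
  assumes "openin (top_of_set (sphere 0 1)) \<Omega>"
    and "connected \<Omega>"
    and "\<Omega> \<noteq> {}"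
    and "\<Omega> \<subset> sphere 0 1"
    and "sphere_smooth_on \<Omega> \<rho>"
    and "preimage_compact_map \<Omega> (UNIV :: real set) \<rho>"
  shows "preimage_compact_map \<Omega> hyperbolic_space (assoc_map \<rho>)"
  unfolding preimage_compact_map_def
proof (intro allI impI)
  fix K :: "(real \<times> (real^'n)) set"
  assume K: "K \<subseteq> hyperbolic_space \<and> compact K"
  have sub: "\<Omega> \<subseteq> sph_cone \<Omega>"
    using assms(4) by (auto simp: sph_cone_def)
  have sm: "smooth_on (sph_cone \<Omega>) (sph_ext \<rho>)"
    using assms(5) by (simp add: sphere_smooth_on_def)
  have c1: "continuous_on \<Omega> (sph_ext \<rho>)"
    using smooth_on_cont[OF sm] sub continuous_on_subset by blast
  have "continuous_on \<Omega> \<rho>"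
  proof (rule continuous_on_eq[OF c1])
    fix x assume "x \<in> \<Omega>"
    then have "norm x = 1" using assms(4) by auto
    then show "sph_ext \<rho> x = \<rho> x" by (simp add: sph_ext_def)
  qed
  note crho = this
  have cg: "continuous_on \<Omega> (sph_grad \<rho>)"
    unfolding sph_grad_def
    apply (rule continuous_on_vec_lambda)
    using smooth_on_cont[OF smooth_on_partial[OF sm]] sub continuous_on_subset by blast
  have cphi: "continuous_on \<Omega> (assoc_map \<rho>)"
    unfolding assoc_map_def
    by (intro continuous_intros crho cg) auto
  obtain C where C: "\<And>p. p \<in> K \<Longrightarrow> norm p \<le> C"
    using K compact_imp_bounded bounded_iff by metis
  define A where "A = {x\<in>\<Omega>. \<rho> x \<in> {-2*C..2*C}}"
  have cA: "compact A"
    using assms(6) unfolding preimage_compact_map_def A_def by auto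
  have bnd: "\<rho> x \<in> {-2*C..2*C}" if "x \<in> \<Omega>" "assoc_map \<rho> x \<in> K" for x
  proof -
    have "fst (assoc_map \<rho> x) \<le> C"
      using C[OF that(2)] by (rule fst_le_aux)
    then have h: "exp (\<rho> x) \<le> 2*C \<and> exp (- \<rho> x) \<le> 2*C"
      using fst_assoc_ge[of \<rho> x] exp_gt_zero[of "\<rho> x"] exp_gt_zero[of "- \<rho> x"]
      by (rule lin_aux)
    have "\<rho> x < exp (\<rho> x)" "- \<rho> x < exp (- \<rho> x)"
      using exp_ge_add_one_self[of "\<rho> x"] exp_ge_add_one_self[of "- \<rho> x"] by linarith+
    then show ?thesis using h by auto
  qed
  have eq: "{x\<in>\<Omega>. assoc_map \<rho> x \<in> K} = A \<inter> (A \<inter> assoc_map \<rho> -` K)"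
    using bnd by (auto simp: A_def)
  have "closed (A \<inter> assoc_map \<rho> -` K)"
    apply (rule continuous_closed_preimage)
    using continuous_on_subset[OF cphi] cA K compact_imp_closed by (auto simp: A_def)
  then show "compact {x\<in>\<Omega>. assoc_map \<rho> x \<in> K}"
    unfolding eq by (rule compact_Int_closed[OF cA])
qed

end
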